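(* Let $\Omega=(\lambda x.x\,x)(\lambda x.x\,x)$. Then $\Omega\approx^p_{\emptyset}\mathcal Sk.\Omega$.
   Context: Terms of $\lambda_S$: $t ::= x \mid \lambda x.t \mid t\,t \mid \mathcal{S}k.t \mid \langle t\rangle$ (shift binds $k$; $\langle\cdot\rangle$ reset), up to $\alpha$-conversion. Values $v::=\lambda x.t$. Pure contexts $E ::= \Box \mid v\,E \mid E\,t$; evaluation contexts $F ::= \Box \mid v\,F \mid F\,t \mid \langle F\rangle$. Reduction: $F[(\lambda x.t)v]\to F[t\{v/x\}]$; $F[\langle E[\mathcal Sk.t]\rangle]\to F[\langle t\{\lambda x.\langle E[x]\rangle/k\}\rangle]$ ($x\notin\mathrm{fv}(E)$); $F[\langle v\rangle]\to F[v]$; $\to^*$ reflexive-transitive closure. Program: term $\langle t\rangle$ (ranged over by $p$). Closures: for $R$ a relation on closed terms, $\widetilde R$ is the smallest relation containing $R$, all $(x,x)$, closed under all term constructors, restricted to closed terms; $\widehat R$ is the smallest relation on closed evaluation contexts with $\Box\widehat R\Box$, $v_0F_0\widehat Rv_1F_1$ if $F_0\widehat RF_1,v_0\widetilde Rv_1$; $F_0t_0\widehat RF_1t_1$ if $F_0\widehat RF_1,t_0\widetilde Rt_1$; $\langle F_0\rangle\widehat R\langle F_1\rangle$ if $F_0\widehat RF_1$. Environmental bisimilarity for programs: an environment $\mathcal E$ is a relation on closed values; an environmental relation $\mathcal X$ is a set of environments and triples $(\mathcal E,t_0,t_1)$, $t_0,t_1$ closed, written $t_0\mathcal X_{\mathcal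 E}t_1$. $\mathcal X$ is an environmental bisimulation for programs if (1) if $t_0\mathcal X_{\mathcal E}t_1$ and $t_0,t_1$ are not both programs, then for all pure $E_0\widehat{\mathcal E}E_1$, $\langle E_0[t_0]\rangle\mathcal X_{\mathcal E}\langle E_1[t_1]\rangle$; (2) if $p_0\mathcal X_{\mathcal E}p_1$: (a) $p_0\to p_0'$ (program) implies $p_1\to^*p_1'$ (program) with $p_0'\mathcal X_{\mathcal E}p_1'$; (b) $p_0\to v_0$ implies $p_1\to^*v_1$ and $\{(v_0,v_1)\}\cup\mathcal E\in\mathcal X$; (c) symmetric conditions; (3) for $\mathcal E\in\mathcal X$, $(\lambda x.t_0)\mathcal E(\lambda x.t_1)$ and $v_0\widetilde{\mathcal E}v_1$ imply $t_0\{v_0/x\}\mathcal X_{\mathcal E}t_1\{v_1/x\}$. $\approx^p$ is the largest such relation; $t_0\approx^p_{\emptyset}t_1$ means $(\emptyset,t_0,t_1)\in\approx^p$. *)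

theory Defs
  imports Main
begin

text \<open>Var n is a de Bruijn index; Lam and Shift each bind index 0 in their body
  (Shift t represents S k. t, with k bound); Reset t is the delimiter.\<close>

datatype trm = Var nat | Lam trm | App trm trm | Shift trm | Reset trm

fun closedn :: "nat \<Rightarrow> trm \<Rightarrow> bool" where
  "closedn k (Var n) = (n < k)"
| "closedn k (Lam t) = closedn (Suc k) t"
| "closedn k (App s t) = (closedn k s \<and> closedn k t)"
| "closedn k (Shift t) = closedn (Suc k) t"
| "closedn k (Reset t) = closedn k t"

definition closed :: "trm \<Rightarrow> bool" where
  "closed t = closedn 0 t"

fun lift :: "nat \<Rightarrow> trm \<Rightarrow> trm" where
  "lift k (Var n) = (if n < k then Var n else Var (Suc n))"
| "lift k (Lam t) = Lam (lift (Suc k) t)"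
| "lift k (App s t) = App (lift k s) (lift k t)"
| "lift k (Shift t) = Shift (lift (Suc k) t)"
| "lift k (Reset t) = Reset (lift k t)"

fun subst :: "trm \<Rightarrow> nat \<Rightarrow> trm \<Rightarrow> trm" where
  "subst (Var n) k s = (if n < k then Var n else if n = k then s else Var (n - 1))"
| "subst (Lam t) k s = Lam (subst t (Suc k) (lift 0 s))"
| "subst (App t u) k s = App (subst t k s) (subst u k s)"
| "subst (Shift t) k s = Shift (subst t (Suc k) (lift 0 s))"
| "subst (Reset t) k s = Reset (subst t k s)"

text \<open>t{v/x} where x is the outermost bound variable (index 0) of the body t.\<close>
definition subst0 :: "trm \<Rightarrow> trm \<Rightarrow> trm" where
  "subst0 t v = subst t 0 v"

fun is_val :: "trm \<Rightarrow> bool" where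
  "is_val (Lam t) = True"
| "is_val _ = False"

fun is_prog :: "trm \<Rightarrow> bool" where
  "is_prog (Reset t) = True"
| "is_prog _ = False"

datatype ctx = Hole | ArgC trm ctx | FunC ctx trm | RCtx ctx

fun plug :: "ctx \<Rightarrow> trm \<Rightarrow> trm" where
  "plug Hole t = t"
| "plug (ArgC v E) t = App v (plug E t)"
| "plug (FunC E u) t = App (plug E t) u"
| "plug (RCtx E) t = Reset (plug E t)"

fun pure :: "ctx \<Rightarrow> bool" where
  "pure Hole = True"
| "pure (ArgC v E) = (is_val v \<and> pure E)"
| "pure (FunC E u) = pure E"
| "pure (RCtx E) = False"

fun evctx :: "ctx \<Rightarrow> bool" where
  "evctx Hole = True"
| "evctx (ArgC v E) = (is_val v \<and> evctx E)"
| "evctx (FunC E u) = evctx E"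
| "evctx (RCtx E) = evctx E"

fun liftc :: "nat \<Rightarrow> ctx \<Rightarrow> ctx" where
  "liftc k Hole = Hole"
| "liftc k (ArgC v E) = ArgC (lift k v) (liftc k E)"
| "liftc k (FunC E u) = FunC (liftc k E) (lift k u)"
| "liftc k (RCtx E) = RCtx (liftc k E)"

inductive red :: "trm \<Rightarrow> trm \<Rightarrow> bool" where
  beta: "evctx F \<Longrightarrow> is_val v \<Longrightarrow>
     red (plug F (App (Lam t) v)) (plug F (subst0 t v))"
| shift: "evctx F \<Longrightarrow> pure E \<Longrightarrow>
     red (plug F (Reset (plug E (Shift t))))
         (plug F (Reset (subst0 t (Lam (Reset (plug (liftc 0 E) (Var 0)))))))"
| reset: "evctx F \<Longrightarrow> is_val v \<Longrightarrow> red (plug F (Reset v)) (plug F v)"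

abbreviation reds :: "trm \<Rightarrow> trm \<Rightarrow> bool" where
  "reds \<equiv> red\<^sup>*\<^sup>*"

inductive compat :: "trm rel \<Rightarrow> trm \<Rightarrow> trm \<Rightarrow> bool" for R where
  base: "(t0, t1) \<in> R \<Longrightarrow> compat R t0 t1"
| var: "compat R (Var n) (Var n)"
| lam: "compat R t0 t1 \<Longrightarrow> compat R (Lam t0) (Lam t1)"
| app: "compat R s0 s1 \<Longrightarrow> compat R t0 t1 \<Longrightarrow> compat R (App s0 t0) (App s1 t1)"
| shft: "compat R t0 t1 \<Longrightarrow> compat R (Shift t0) (Shift t1)"
| rst: "compat R t0 t1 \<Longrightarrow> compat R (Reset t0) (Reset t1)"

definition tilde :: "trm rel \<Rightarrow> trm rel" where
  "tilde R = {(t0, t1). compat R t0 t1 \<and> closed t0 \<and> closed t1}"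

inductive hat :: "trm rel \<Rightarrow> ctx \<Rightarrow> ctx \<Rightarrow> bool" for R where
  hole: "hat R Hole Hole"
| arg: "hat R F0 F1 \<Longrightarrow> is_val v0 \<Longrightarrow> is_val v1 \<Longrightarrow> (v0, v1) \<in> tilde R \<Longrightarrow>
         hat R (ArgC v0 F0) (ArgC v1 F1)"
| func: "hat R F0 F1 \<Longrightarrow> (t0, t1) \<in> tilde R \<Longrightarrow> hat R (FunC F0 t0) (FunC F1 t1)"
| rctx: "hat R F0 F1 \<Longrightarrow> hat R (RCtx F0) (RCtx F1)"

text \<open>An environmental relation is a set whose elements are environments (Env E)
  or triples (Tri E t0 t1), the latter written t0 X_E t1.\<close>
datatype elem = Env "trm rel" | Tri "trm rel" trm trm

definition is_env :: "trm rel \<Rightarrow> bool" where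
  "is_env E \<longleftrightarrow> (\<forall>(v0, v1) \<in> E. is_val v0 \<and> is_val v1 \<and> closed v0 \<and> closed v1)"

definition env_rel :: "elem set \<Rightarrow> bool" where
  "env_rel X \<longleftrightarrow> (\<forall>E. Env E \<in> X \<longrightarrow> is_env E) \<and>
     (\<forall>E t0 t1. Tri E t0 t1 \<in> X \<longrightarrow> is_env E \<and> closed t0 \<and> closed t1)"

definition env_bisim :: "elem set \<Rightarrow> bool" where
  "env_bisim X \<longleftrightarrow> env_rel X \<and>
   \<comment> \<open>(1)\<close>
   (\<forall>E t0 t1. Tri E t0 t1 \<in> X \<and> \<not> (is_prog t0 \<and> is_prog t1) \<longrightarrow>
      (\<forall>E0 E1. pure E0 \<and> pure E1 \<and> hat E E0 E1 \<longrightarrow>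
         Tri E (Reset (plug E0 t0)) (Reset (plug E1 t1)) \<in> X)) \<and>
   \<comment> \<open>(2)\<close>
   (\<forall>E p0 p1. Tri E p0 p1 \<in> X \<and> is_prog p0 \<and> is_prog p1 \<longrightarrow>
      (\<forall>p0'. red p0 p0' \<and> is_prog p0' \<longrightarrow>
          (\<exists>p1'. reds p1 p1' \<and> is_prog p1' \<and> Tri E p0' p1' \<in> X)) \<and>
      (\<forall>v0. red p0 v0 \<and> is_val v0 \<longrightarrow>
          (\<exists>v1. reds p1 v1 \<and> is_val v1 \<and> Env ({(v0, v1)} \<union> E) \<in> X)) \<and>
      (\<forall>p1'. red p1 p1' \<and> is_prog p1' \<longrightarrow>
          (\<exists>p0'. reds p0 p0' \<and> is_prog p0' \<and> Tri E p0' p1' \<in> X)) \<and>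
      (\<forall>v1. red p1 v1 \<and> is_val v1 \<longrightarrow>
          (\<exists>v0. reds p0 v0 \<and> is_val v0 \<and> Env ({(v0, v1)} \<union> E) \<in> X))) \<and>
   \<comment> \<open>(3)\<close>
   (\<forall>E t0 t1 v0 v1. Env E \<in> X \<and> (Lam t0, Lam t1) \<in> E \<and> is_val v0 \<and> is_val v1 \<and>
        (v0, v1) \<in> tilde E \<longrightarrow> Tri E (subst0 t0 v0) (subst0 t1 v1) \<in> X)"

definition bisim_p :: "elem set" where
  "bisim_p = \<Union>{X. env_bisim X}"

definition Omega :: trm where
  "Omega = App (Lam (App (Var 0) (Var 0))) (Lam (App (Var 0) (Var 0)))"

end

theory Submission
  imports Defs
begin

lemma H1[simp]: "is_val (plug F x) = (F = Hole \<and> is_val x)"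
  by (cases F) auto

lemma H1'[simp]: "(plug F x = Lam t) = (F = Hole \<and> x = Lam t)"
  by (cases F) auto

lemma H1''[simp]: "(Lam t = plug F x) = (F = Hole \<and> x = Lam t)"
  by (cases F) auto

lemma pure_ev: "pure E \<Longrightarrow> evctx E"
  by (induction E) auto

lemma L7: "evctx F \<Longrightarrow> evctx G \<Longrightarrow> plug F (Shift t) = plug G Omega \<Longrightarrow> False"
proof (induction F arbitrary: G)
  case Hole then show ?case by (cases G) (auto simp: Omega_def)
next
  case (ArgC w F) then show ?case
    by (cases G) (auto simp: Omega_def)
next
  case (FunC F u) then show ?case
    by (cases G) (auto simp: Omega_def)
next
  case (RCtx F) then show ?case
    by (cases G) (auto simp: Omega_def)
qed

lemma L1: "evctx F \<Longrightarrow> evctx G \<Longrightarrow> is_val v \<Longrightarrow> plug F (App (Lam t) v) = plug G Omega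
   \<Longrightarrow> F = G \<and> t = App (Var 0) (Var 0) \<and> v = Lam (App (Var 0) (Var 0))"
proof (induction F arbitrary: G)
  case Hole then show ?case by (cases G) (auto simp: Omega_def)
next
  case (ArgC w F) then show ?case
    by (cases G) (auto simp: Omega_def)
next
  case (FunC F u) then show ?case
    by (cases G) (auto simp: Omega_def)
next
  case (RCtx F) then show ?case
    by (cases G) (auto simp: Omega_def)
qed

lemma L2: "evctx F \<Longrightarrow> evctx G \<Longrightarrow> is_val v \<Longrightarrow> plug F (Reset v) = plug G Omega \<Longrightarrow> False"
proof (induction F arbitrary: G)
  case Hole then show ?case by (cases G) (auto simp: Omega_def)
next
  case (ArgC w F) then show ?case
    by (cases G) (auto simp: Omega_def)
next
  case (FunC F u) then show ?case
    by (cases G) (auto simp: Omega_def)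
next
  case (RCtx F) then show ?case
    by (cases G) (auto simp: Omega_def)
qed

lemma L3: "evctx F \<Longrightarrow> evctx G \<Longrightarrow> pure E \<Longrightarrow> plug F (Reset (plug E (Shift t))) = plug G Omega \<Longrightarrow> False"
proof (induction F arbitrary: G)
  case Hole then show ?case by (cases G) (auto simp: Omega_def dest: L7[OF pure_ev])
next
  case (ArgC w F) then show ?case
    by (cases G) (auto simp: Omega_def)
next
  case (FunC F u) then show ?case
    by (cases G) (auto simp: Omega_def)
next
  case (RCtx F) then show ?case
    by (cases G) (auto simp: Omega_def)
qed

lemma L4: "evctx F \<Longrightarrow> evctx G \<Longrightarrow> is_val v \<Longrightarrow> plug F (App (Lam t) v) = plug G (Shift u) \<Longrightarrow> False"
proof (induction F arbitrary: G)
  case Hole then show ?case by (cases G) (auto)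
next
  case (ArgC w F) then show ?case
    by (cases G) (auto)
next
  case (FunC F u) then show ?case
    by (cases G) (auto)
next
  case (RCtx F) then show ?case
    by (cases G) (auto)
qed

lemma L5: "evctx F \<Longrightarrow> evctx G \<Longrightarrow> is_val v \<Longrightarrow> plug F (Reset v) = plug G (Shift u) \<Longrightarrow> False"
proof (induction F arbitrary: G)
  case Hole then show ?case by (cases G) (auto)
next
  case (ArgC w F) then show ?case
    by (cases G) (auto)
next
  case (FunC F u) then show ?case
    by (cases G) (auto)
next
  case (RCtx F) then show ?case
    by (cases G) (auto)
qed

lemma L9: "evctx F \<Longrightarrow> pure G \<Longrightarrow> plug F (Reset y) = plug G (Shift u) \<Longrightarrow> False"
proof (induction F arbitrary: G)
  case Hole then show ?case by (cases G) (auto)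
next
  case (ArgC w F) then show ?case
    by (cases G) (auto)
next
  case (FunC F u) then show ?case
    by (cases G) (auto)
next
  case (RCtx F) then show ?case
    by (cases G) (auto)
qed

lemma L8: "pure F \<Longrightarrow> pure G \<Longrightarrow> plug F (Shift t) = plug G (Shift u) \<Longrightarrow> t = u"
proof (induction F arbitrary: G)
  case Hole then show ?case by (cases G) (auto)
next
  case (ArgC w F) then show ?case
    by (cases G) (auto)
next
  case (FunC F u) then show ?case
    by (cases G) (auto)
next
  case (RCtx F) then show ?case
    by (cases G) (auto)
qed

lemma L6: "evctx F \<Longrightarrow> pure E \<Longrightarrow> pure G \<Longrightarrow>
   plug F (Reset (plug E (Shift t))) = Reset (plug G (Shift u)) \<Longrightarrow> F = Hole \<and> t = u"
  apply (cases F)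
     apply (auto dest: L8)
  using L9 by (metis pure_ev)

lemma subst_Omega: "subst Omega k s = Omega"
  by (simp add: Omega_def)

lemma left_red: "pure E \<Longrightarrow> red (Reset (plug E Omega)) q \<Longrightarrow> q = Reset (plug E Omega)"
proof (erule red.cases)
  fix F v t
  assume pe: "pure E" and e: "Reset (plug E Omega) = plug F (App (Lam t) v)"
    and q: "q = plug F (subst0 t v)" and ev: "evctx F" "is_val v"
  have "plug F (App (Lam t) v) = plug (RCtx E) Omega" using e by simp
  then have "F = RCtx E \<and> t = App (Var 0) (Var 0) \<and> v = Lam (App (Var 0) (Var 0))"
    using L1[of F "RCtx E" v t] ev pe pure_ev by auto
  then show ?thesis using q by (simp add: subst0_def Omega_def)
next
  fix F E' t
  assume "pure E" "Reset (plug E Omega) = plug F (Reset (plug E' (Shift t)))" "evctx F" "pure E'"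
  then show ?thesis using L3[of F "RCtx E" E' t] pure_ev by auto
next
  fix F v
  assume "pure E" "Reset (plug E Omega) = plug F (Reset v)" "evctx F" "is_val v"
  then show ?thesis using L2[of F "RCtx E" v] pure_ev by auto
qed

lemma right_red: "pure E \<Longrightarrow> red (Reset (plug E (Shift Omega))) q \<Longrightarrow> q = Reset Omega"
proof (erule red.cases)
  fix F v t
  assume "pure E" "Reset (plug E (Shift Omega)) = plug F (App (Lam t) v)" "evctx F" "is_val v"
  then show ?thesis using L4[of F "RCtx E" v t Omega] pure_ev by auto
next
  fix F E' t
  assume a: "pure E" "Reset (plug E (Shift Omega)) = plug F (Reset (plug E' (Shift t)))" "evctx F" "pure E'"
    and q: "q = plug F (Reset (subst0 t (Lam (Reset (plug (liftc 0 E') (Var 0))))))"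
  then have "F = Hole \<and> t = Omega" using L6[of F E' E t Omega] by auto
  then show ?thesis using q by (simp add: subst0_def subst_Omega)
next
  fix F v
  assume "pure E" "Reset (plug E (Shift Omega)) = plug F (Reset v)" "evctx F" "is_val v"
  then show ?thesis using L5[of F "RCtx E" v Omega] pure_ev by auto
qed

lemma hat_closed: "hat R F0 F1 \<Longrightarrow> closed t0 \<Longrightarrow> closed t1 \<Longrightarrow>
   closed (plug F0 t0) \<and> closed (plug F1 t1)"
  by (induction rule: hat.induct) (auto simp: tilde_def closed_def)

definition AA :: "trm set" where
  "AA = {Reset (plug E Omega) | E. pure E \<and> closed (plug E Omega)}"
definition BB :: "trm set" where
  "BB = {Reset (plug E (Shift Omega)) | E. pure E \<and> closed (plug E (Shift Omega))} \<union> AA"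

definition XX :: "elem set" where
  "XX = {Tri {} Omega (Shift Omega)} \<union> {Tri {} p q | p q. p \<in> AA \<and> q \<in> BB}"

lemma AA_red: "p \<in> AA \<Longrightarrow> red p q \<Longrightarrow> q = p"
  unfolding AA_def using left_red by blast

lemma BB_red: "p \<in> BB \<Longrightarrow> red p q \<Longrightarrow> q \<in> AA"
proof -
  assume p: "p \<in> BB" and r: "red p q"
  have RO: "Reset Omega \<in> AA" unfolding AA_def
    by (rule CollectI, rule exI[of _ Hole]) (simp add: Omega_def closed_def)
  show ?thesis
  proof (cases "p \<in> AA")
    case True then show ?thesis using AA_red r by auto
  next
    case False
    then obtain E where "pure E" "p = Reset (plug E (Shift Omega))" using p unfolding BB_def by auto
    then show ?thesis using right_red r RO by auto
  qed
qed

lemma AA_prog: "p \<in> AA \<Longrightarrow> is_prog p \<and> closed p \<and> \<not> is_val p"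
  unfolding AA_def closed_def by auto
lemma BB_prog: "p \<in> BB \<Longrightarrow> is_prog p \<and> closed p \<and> \<not> is_val p"
  unfolding BB_def AA_def closed_def by auto

lemma XX_bisim: "env_bisim XX"
  unfolding env_bisim_def
proof (intro conjI)
  show "env_rel XX"
    unfolding env_rel_def XX_def is_env_def
    using AA_prog BB_prog by (auto simp: closed_def Omega_def)
next
  show "\<forall>E t0 t1. Tri E t0 t1 \<in> XX \<and> \<not> (is_prog t0 \<and> is_prog t1) \<longrightarrow>
      (\<forall>E0 E1. pure E0 \<and> pure E1 \<and> hat E E0 E1 \<longrightarrow>
         Tri E (Reset (plug E0 t0)) (Reset (plug E1 t1)) \<in> XX)"
  proof (intro allI impI)
    fix E t0 t1 E0 E1
    assume a: "Tri E t0 t1 \<in> XX \<and> \<not> (is_prog t0 \<and> is_prog t1)"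
      and b: "pure E0 \<and> pure E1 \<and> hat E E0 E1"
    have "E = {} \<and> t0 = Omega \<and> t1 = Shift Omega"
      using a AA_prog BB_prog unfolding XX_def by auto
    moreover have "closed Omega" "closed (Shift Omega)" by (auto simp: closed_def Omega_def)
    ultimately show "Tri E (Reset (plug E0 t0)) (Reset (plug E1 t1)) \<in> XX"
      using b hat_closed[of E E0 E1 Omega "Shift Omega"]
      unfolding XX_def AA_def BB_def by blast
  qed
next
  show "\<forall>E p0 p1. Tri E p0 p1 \<in> XX \<and> is_prog p0 \<and> is_prog p1 \<longrightarrow>
      (\<forall>p0'. red p0 p0' \<and> is_prog p0' \<longrightarrow>
          (\<exists>p1'. reds p1 p1' \<and> is_prog p1' \<and> Tri E p0' p1' \<in> XX)) \<and>
      (\<forall>v0. red p0 v0 \<and> is_val v0 \<longrightarrow>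
          (\<exists>v1. reds p1 v1 \<and> is_val v1 \<and> Env ({(v0, v1)} \<union> E) \<in> XX)) \<and>
      (\<forall>p1'. red p1 p1' \<and> is_prog p1' \<longrightarrow>
          (\<exists>p0'. reds p0 p0' \<and> is_prog p0' \<and> Tri E p0' p1' \<in> XX)) \<and>
      (\<forall>v1. red p1 v1 \<and> is_val v1 \<longrightarrow>
          (\<exists>v0. reds p0 v0 \<and> is_val v0 \<and> Env ({(v0, v1)} \<union> E) \<in> XX))"
  proof (intro allI impI)
    fix E p0 p1
    assume a: "Tri E p0 p1 \<in> XX \<and> is_prog p0 \<and> is_prog p1"
    then have h: "E = {} \<and> p0 \<in> AA \<and> p1 \<in> BB"
      unfolding XX_def by (auto simp: Omega_def)
    have AB: "AA \<subseteq> BB" unfolding BB_def by auto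
    show "(\<forall>p0'. red p0 p0' \<and> is_prog p0' \<longrightarrow>
          (\<exists>p1'. reds p1 p1' \<and> is_prog p1' \<and> Tri E p0' p1' \<in> XX)) \<and>
      (\<forall>v0. red p0 v0 \<and> is_val v0 \<longrightarrow>
          (\<exists>v1. reds p1 v1 \<and> is_val v1 \<and> Env ({(v0, v1)} \<union> E) \<in> XX)) \<and>
      (\<forall>p1'. red p1 p1' \<and> is_prog p1' \<longrightarrow>
          (\<exists>p0'. reds p0 p0' \<and> is_prog p0' \<and> Tri E p0' p1' \<in> XX)) \<and>
      (\<forall>v1. red p1 v1 \<and> is_val v1 \<longrightarrow>
          (\<exists>v0. reds p0 v0 \<and> is_val v0 \<and> Env ({(v0, v1)} \<union> E) \<in> XX))"
    proof (intro conjI allI impI)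
      fix p0' assume "red p0 p0' \<and> is_prog p0'"
      then have "p0' = p0" using AA_red h by auto
      then show "\<exists>p1'. reds p1 p1' \<and> is_prog p1' \<and> Tri E p0' p1' \<in> XX"
        using h a unfolding XX_def by auto
    next
      fix v0 assume "red p0 v0 \<and> is_val v0"
      then show "\<exists>v1. reds p1 v1 \<and> is_val v1 \<and> Env ({(v0, v1)} \<union> E) \<in> XX"
        using AA_red AA_prog h by fastforce
    next
      fix p1' assume "red p1 p1' \<and> is_prog p1'"
      then have "p1' \<in> AA" using BB_red h by auto
      then show "\<exists>p0'. reds p0 p0' \<and> is_prog p0' \<and> Tri E p0' p1' \<in> XX"
        using h a AB unfolding XX_def by auto
    next
      fix v1 assume "red p1 v1 \<and> is_val v1"
      then show "\<exists>v0. reds p0 v0 \<and> is_val v0 \<and> Env ({(v0, v1)} \<union> E) \<in> XX"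
        using BB_red AA_prog h by fastforce
    qed
  qed
next
  show "\<forall>E t0 t1 v0 v1. Env E \<in> XX \<and> (Lam t0, Lam t1) \<in> E \<and> is_val v0 \<and> is_val v1 \<and>
        (v0, v1) \<in> tilde E \<longrightarrow> Tri E (subst0 t0 v0) (subst0 t1 v1) \<in> XX"
    unfolding XX_def by auto
qed

theorem lemma18:
  shows "Tri {} Omega (Shift Omega) \<in> bisim_p"
  unfolding bisim_p_def using XX_bisim by (auto simp: XX_def)

end
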